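(* Let $X$ be an infinite compact metric space and $T:X\to X$ continuous, and let $T_K$ be the induced map on the hyperspace $K(X)$. Then $(K(X),T_K)$ is exactly Devaney chaotic if and only if $(X,T)$ is topologically exact and is an HY-system.
   Context: $K(X)$ is the space of non-empty closed subsets of $X$ with the Hausdorff metric $d_H(A,B)=\max\{\max_{x\in A}\min_{y\in B}d(x,y),\ \max_{y\in B}\min_{x\in A}d(x,y)\}$, and $T_K(C)=TC$. A dynamical system $(Y,S)$ (compact metric $Y$, continuous $S$) is topologically exact if for every non-empty open $U\subset Y$ there is $n\in\mathbb{N}$ with $S^nU=Y$; it is exactly Devaney chaotic if it is topologically exact and its periodic points (points $y$ with $S^ny=y$ for some $n\in\mathbb{N}$) are dense. $(Y,S)$ is transitive if for any non-empty open $U,V$ there is $n\in\mathbb{N}$ with $S^nU\cap V\ne\emptyset$; totally transitive if $(Y,S^n)$ is transitive for all $n\in\mathbb{N}$. $(Y,S)$ has dense small periodic sets if for every non-empty open $U\subset Y$ there exist a non-empty closed $Z\subset U$ and $k\in\mathbb{N}$ with $S^kZ\subset Z$. An HY-system is a totally transitive system with dense small periodic sets. *)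

theory Defs
  imports "HOL-Analysis.Analysis"
begin

definition mopen :: "('b \<Rightarrow> 'b \<Rightarrow> real) \<Rightarrow> 'b set \<Rightarrow> 'b set \<Rightarrow> bool" where
  "mopen d Y U \<longleftrightarrow> U \<subseteq> Y \<and> (\<forall>x\<in>U. \<exists>e>0. \<forall>y\<in>Y. d x y < e \<longrightarrow> y \<in> U)"

definition mclosed :: "('b \<Rightarrow> 'b \<Rightarrow> real) \<Rightarrow> 'b set \<Rightarrow> 'b set \<Rightarrow> bool" where
  "mclosed d Y Z \<longleftrightarrow> Z \<subseteq> Y \<and> mopen d Y (Y - Z)"

definition topologically_exact :: "('b \<Rightarrow> 'b \<Rightarrow> real) \<Rightarrow> 'b set \<Rightarrow> ('b \<Rightarrow> 'b) \<Rightarrow> bool" where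
  "topologically_exact d Y S \<longleftrightarrow>
     (\<forall>U. mopen d Y U \<and> U \<noteq> {} \<longrightarrow> (\<exists>n\<ge>1. (S ^^ n) ` U = Y))"

definition periodic_point :: "'b set \<Rightarrow> ('b \<Rightarrow> 'b) \<Rightarrow> 'b \<Rightarrow> bool" where
  "periodic_point Y S y \<longleftrightarrow> y \<in> Y \<and> (\<exists>n\<ge>1. (S ^^ n) y = y)"

definition exactly_devaney_chaotic :: "('b \<Rightarrow> 'b \<Rightarrow> real) \<Rightarrow> 'b set \<Rightarrow> ('b \<Rightarrow> 'b) \<Rightarrow> bool" where
  "exactly_devaney_chaotic d Y S \<longleftrightarrow> topologically_exact d Y S \<and>
     (\<forall>U. mopen d Y U \<and> U \<noteq> {} \<longrightarrow> (\<exists>y\<in>U. periodic_point Y S y))"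

definition transitive_sys :: "('b \<Rightarrow> 'b \<Rightarrow> real) \<Rightarrow> 'b set \<Rightarrow> ('b \<Rightarrow> 'b) \<Rightarrow> bool" where
  "transitive_sys d Y S \<longleftrightarrow>
     (\<forall>U V. mopen d Y U \<and> U \<noteq> {} \<and> mopen d Y V \<and> V \<noteq> {} \<longrightarrow>
        (\<exists>n\<ge>1. (S ^^ n) ` U \<inter> V \<noteq> {}))"

definition totally_transitive :: "('b \<Rightarrow> 'b \<Rightarrow> real) \<Rightarrow> 'b set \<Rightarrow> ('b \<Rightarrow> 'b) \<Rightarrow> bool" where
  "totally_transitive d Y S \<longleftrightarrow> (\<forall>n\<ge>1. transitive_sys d Y (S ^^ n))"

definition dense_small_periodic_sets :: "('b \<Rightarrow> 'b \<Rightarrow> real) \<Rightarrow> 'b set \<Rightarrow> ('b \<Rightarrow> 'b) \<Rightarrow> bool" where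
  "dense_small_periodic_sets d Y S \<longleftrightarrow>
     (\<forall>U. mopen d Y U \<and> U \<noteq> {} \<longrightarrow>
        (\<exists>Z k. mclosed d Y Z \<and> Z \<noteq> {} \<and> Z \<subseteq> U \<and> k \<ge> 1 \<and> (S ^^ k) ` Z \<subseteq> Z))"

definition HY_system :: "('b \<Rightarrow> 'b \<Rightarrow> real) \<Rightarrow> 'b set \<Rightarrow> ('b \<Rightarrow> 'b) \<Rightarrow> bool" where
  "HY_system d Y S \<longleftrightarrow> totally_transitive d Y S \<and> dense_small_periodic_sets d Y S"

text \<open>Hyperspace K(X) of nonempty closed subsets of X, with the Hausdorff metric
  (max/min written as Sup/Inf, which coincide on nonempty compact sets).\<close>

definition hyperspace :: "'a::metric_space set \<Rightarrow> 'a set set" where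
  "hyperspace X = {C. C \<subseteq> X \<and> C \<noteq> {} \<and> closed C}"

definition hausdorff_dist :: "'a::metric_space set \<Rightarrow> 'a set \<Rightarrow> real" where
  "hausdorff_dist A B = max (SUP x\<in>A. INF y\<in>B. dist x y) (SUP y\<in>B. INF x\<in>A. dist x y)"

definition induced_map :: "('a \<Rightarrow> 'a) \<Rightarrow> 'a set \<Rightarrow> 'a set" where
  "induced_map T C = T ` C"

end

theory Submission imports Defs begin

lemma bdd_INF_dist: "bdd_below ((\<lambda>x. dist x y) ` C)"
  by (rule bdd_belowI[of _ 0]) auto

lemma INF_dist_le: "x \<in> C \<Longrightarrow> (INF x\<in>C. dist x y) \<le> dist x y"
  by (rule cINF_lower[OF bdd_INF_dist])

lemma INF_dist_le': "y \<in> D \<Longrightarrow> (INF y\<in>D. dist x y) \<le> dist x y"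
  by (rule cINF_lower) (auto intro: bdd_belowI[of _ 0])

lemma hd_ge1:
  assumes "bounded D" "C \<noteq> {}" "y \<in> D"
  shows "(INF x\<in>C. dist x y) \<le> hausdorff_dist C D"
proof -
  obtain x0 where x0: "x0 \<in> C" using assms by auto
  obtain b where b: "\<forall>y\<in>D. dist x0 y \<le> b" using assms(1) bounded_any_center by blast
  have "bdd_above ((\<lambda>y. INF x\<in>C. dist x y) ` D)"
    by (rule bdd_aboveI[of _ b]) (use b INF_dist_le[OF x0] in \<open>auto intro: order_trans\<close>)
  then have "(INF x\<in>C. dist x y) \<le> (SUP y\<in>D. INF x\<in>C. dist x y)"
    using assms(3) by (meson cSUP_upper)
  then show ?thesis unfolding hausdorff_dist_def by linarith
qed

lemma hd_bound:
  assumes "C \<noteq> {}" "D \<noteq> {}" "\<And>y. y\<in>D \<Longrightarrow> \<exists>x\<in>C. dist x y \<le> r"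
    "\<And>x. x\<in>C \<Longrightarrow> \<exists>y\<in>D. dist x y \<le> r"
  shows "hausdorff_dist C D \<le> r"
proof -
  have 1: "(SUP y\<in>D. INF x\<in>C. dist x y) \<le> r"
  proof (rule cSUP_least[OF assms(2)])
    fix y assume "y \<in> D"
    then obtain x where "x \<in> C" "dist x y \<le> r" using assms(3) by blast
    then show "(INF x\<in>C. dist x y) \<le> r" using INF_dist_le[of x C y] by (meson order_trans)
  qed
  have 2: "(SUP x\<in>C. INF y\<in>D. dist x y) \<le> r"
  proof (rule cSUP_least[OF assms(1)])
    fix x assume "x \<in> C"
    then obtain y where "y \<in> D" "dist x y \<le> r" using assms(4) by blast
    then show "(INF y\<in>D. dist x y) \<le> r" using INF_dist_le'[of y D x] by (meson order_trans)
  qed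
  show ?thesis unfolding hausdorff_dist_def using 1 2 by simp
qed

lemma vietoris:
  assumes "compact A" "A \<noteq> {}" "e > 0"
  obtains F where "finite F" "F \<subseteq> A" "F \<noteq> {}" "A \<subseteq> (\<Union>a\<in>F. ball a (e/3))"
    "\<And>D. D \<noteq> {} \<Longrightarrow> D \<subseteq> (\<Union>a\<in>F. ball a (e/3)) \<Longrightarrow> (\<forall>a\<in>F. D \<inter> ball a (e/3) \<noteq> {})
       \<Longrightarrow> hausdorff_dist A D < e"
proof -
  have "A \<subseteq> (\<Union>a\<in>A. ball a (e/3))" using assms by auto
  then obtain F where F: "F \<subseteq> A" "finite F" "A \<subseteq> (\<Union>a\<in>F. ball a (e/3))"
    using compactE_image[OF assms(1), of A "\<lambda>a. ball a (e/3)"] by blast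
  have Fne: "F \<noteq> {}" using F(3) assms(2) by auto
  show ?thesis
  proof (rule that[OF F(2) F(1) Fne F(3)])
    fix D assume D: "D \<noteq> {}" "D \<subseteq> (\<Union>a\<in>F. ball a (e/3))" "\<forall>a\<in>F. D \<inter> ball a (e/3) \<noteq> {}"
    have "hausdorff_dist A D \<le> 2*e/3"
    proof (rule hd_bound[OF assms(2) D(1)])
      fix y assume "y \<in> D"
      then obtain a where "a \<in> F" "dist a y < e/3" using D(2) by auto
      then show "\<exists>x\<in>A. dist x y \<le> 2*e/3" using F(1) assms(3) by (intro bexI[of _ a]) auto
    next
      fix x assume "x \<in> A"
      then obtain a where a: "a \<in> F" "dist a x < e/3" using F(3) by auto
      from D(3) a(1) obtain y where y: "y \<in> D" "y \<in> ball a (e/3)" by blast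
      have "dist x y \<le> dist a x + dist a y" by (rule dist_triangle3)
      then show "\<exists>y\<in>D. dist x y \<le> 2*e/3" using a y by (intro bexI[of _ y]) (auto simp: mem_ball)
    qed
    then show "hausdorff_dist A D < e" using assms(3) by linarith
  qed
qed


lemma induced_pow: "(induced_map T ^^ n) C = (T ^^ n) ` C"
  by (induction n) (auto simp: induced_map_def image_comp)

lemma pow_cont:
  assumes "continuous_on X T" "T ` X \<subseteq> X"
  shows "continuous_on X (T ^^ n) \<and> (T ^^ n) ` X \<subseteq> X"
proof (induction n)
  case 0 then show ?case by (simp add: continuous_on_id)
next
  case (Suc n)
  then have "continuous_on X (T \<circ> (T ^^ n))"
    by (intro continuous_on_compose) (auto intro: continuous_on_subset[OF assms(1)])
  moreover have "(T ^^ Suc n) ` X \<subseteq> X" using Suc assms(2) by (auto simp: image_subset_iff)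
  ultimately show ?case by simp
qed

lemma hyp_compact: "compact X \<Longrightarrow> C \<in> hyperspace X \<Longrightarrow> compact C"
  unfolding hyperspace_def by (metis (mono_tags, lifting) Int_absorb1 compact_Int_closed mem_Collect_eq)

lemma hyp_image:
  assumes "compact X" "continuous_on X T" "T ` X \<subseteq> X" "C \<in> hyperspace X"
  shows "(T ^^ n) ` C \<in> hyperspace X"
proof -
  have c: "compact C" using hyp_compact assms by blast
  have sub: "C \<subseteq> X" "C \<noteq> {}" using assms(4) by (auto simp: hyperspace_def)
  have "continuous_on C (T ^^ n)" using pow_cont[OF assms(2,3)] sub continuous_on_subset by blast
  then have "compact ((T ^^ n) ` C)" using c compact_continuous_image by blast
  then show ?thesis using sub pow_cont[OF assms(2,3), of n] unfolding hyperspace_def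
    by (auto intro: compact_imp_closed)
qed

lemma mopen_ball: "mopen dist X (ball a r \<inter> X)"
  unfolding mopen_def
proof (intro conjI ballI)
  fix x assume "x \<in> ball a r \<inter> X"
  then have x: "dist a x < r" "x \<in> X" by auto
  show "\<exists>e>0. \<forall>y\<in>X. dist x y < e \<longrightarrow> y \<in> ball a r \<inter> X"
  proof (intro exI[of _ "r - dist a x"] conjI ballI impI)
    fix y assume "y \<in> X" "dist x y < r - dist a x"
    moreover have "dist a y \<le> dist a x + dist x y" by (rule dist_triangle)
    ultimately show "y \<in> ball a r \<inter> X" by (auto simp: mem_ball)
  qed (use x in auto)
qed auto

lemma mopen_nbhd:
  assumes "mopen dist X U" "compact C" "C \<subseteq> U"
  shows "\<exists>e>0. \<forall>x\<in>C. \<forall>y\<in>X. dist x y < e \<longrightarrow> y \<in> U"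
proof -
  have "\<forall>x\<in>C. \<exists>e>0. \<forall>y\<in>X. dist x y < e \<longrightarrow> y \<in> U" using assms(1,3) unfolding mopen_def by blast
  from bchoice[OF this] obtain f where f: "\<forall>x\<in>C. f x > 0 \<and> (\<forall>y\<in>X. dist x y < f x \<longrightarrow> y \<in> U)" by blast
  have "C \<subseteq> \<Union>((\<lambda>x. ball x (f x)) ` C)" using f by auto
  then obtain e where e: "e > 0" "\<And>x. x \<in> C \<Longrightarrow> \<exists>G \<in> (\<lambda>x. ball x (f x)) ` C. ball x e \<subseteq> G"
    by (rule Heine_Borel_lemma[OF assms(2)]) auto
  show ?thesis
  proof (intro exI[of _ e] conjI ballI impI)
    fix x y assume xy: "x \<in> C" "y \<in> X" "dist x y < e"
    then obtain c where "c \<in> C" "ball x e \<subseteq> ball c (f c)" using e(2) by blast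
    then have "dist c y < f c" using xy(3) by (auto simp: subset_eq mem_ball)
    then show "y \<in> U" using f \<open>c \<in> C\<close> xy(2) by blast
  qed (use e in auto)
qed

lemma hyp_open_sub:
  assumes "compact X" "mopen dist X U"
  shows "mopen hausdorff_dist (hyperspace X) {C \<in> hyperspace X. C \<subseteq> U}"
  unfolding mopen_def
proof (intro conjI ballI)
  fix C assume C: "C \<in> {C \<in> hyperspace X. C \<subseteq> U}"
  then have cC: "compact C" "C \<noteq> {}" using hyp_compact[OF assms(1)] by (auto simp: hyperspace_def)
  obtain e where e: "e > 0" "\<forall>x\<in>C. \<forall>y\<in>X. dist x y < e \<longrightarrow> y \<in> U"
    using mopen_nbhd[OF assms(2) cC(1)] C by auto
  show "\<exists>e>0. \<forall>D\<in>hyperspace X. hausdorff_dist C D < e \<longrightarrow> D \<in> {C \<in> hyperspace X. C \<subseteq> U}"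
  proof (intro exI[of _ e] conjI ballI impI)
    fix D assume D: "D \<in> hyperspace X" "hausdorff_dist C D < e"
    have bD: "bounded D" using hyp_compact[OF assms(1) D(1)] compact_imp_bounded by blast
    have "D \<subseteq> U"
    proof
      fix y assume y: "y \<in> D"
      have "(INF x\<in>C. dist x y) < e" using hd_ge1[OF bD cC(2) y] D(2) by linarith
      then obtain x where "x \<in> C" "dist x y < e" using cINF_less_iff[OF cC(2) bdd_INF_dist] by blast
      then show "y \<in> U" using e y D(1) by (auto simp: hyperspace_def)
    qed
    then show "D \<in> {C \<in> hyperspace X. C \<subseteq> U}" using D by auto
  qed (use e in auto)
qed auto

lemma closed_mclosed: "closed C \<Longrightarrow> C \<subseteq> X \<Longrightarrow> mclosed dist X C"
  unfolding mclosed_def mopen_def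
proof (intro conjI ballI)
  assume "closed C" "C \<subseteq> X"
  fix x assume x: "x \<in> X - C"
  have "open (- C)" using \<open>closed C\<close> by auto
  then obtain e where "e > 0" "\<forall>y. dist y x < e \<longrightarrow> y \<in> - C" using x unfolding open_dist by blast
  then show "\<exists>e>0. \<forall>y\<in>X. dist x y < e \<longrightarrow> y \<in> X - C" by (auto simp: dist_commute)
qed auto

lemma mclosed_closed:
  assumes "closed X" "mclosed dist X Z" shows "closed Z"
proof -
  have ZX: "Z \<subseteq> X" using assms(2) by (simp add: mclosed_def)
  have "open (- Z)" unfolding open_dist
  proof (intro ballI)
    fix x assume x: "x \<in> - Z"
    show "\<exists>e>0. \<forall>y. dist y x < e \<longrightarrow> y \<in> - Z"
    proof (cases "x \<in> X")
      case True
      then obtain e where "e > 0" "\<forall>y\<in>X. dist x y < e \<longrightarrow> y \<in> X - Z"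
        using assms(2) x unfolding mclosed_def mopen_def by blast
      then show ?thesis using ZX by (intro exI[of _ e]) (auto simp: dist_commute)
    next
      case False
      have "open (- X)" using assms(1) by auto
      then obtain e where "e > 0" "\<forall>y. dist y x < e \<longrightarrow> y \<in> - X" using False unfolding open_dist by blast
      then show ?thesis using ZX by (intro exI[of _ e]) auto
    qed
  qed
  then show ?thesis by (simp add: closed_def)
qed

lemma pow_antimono:
  assumes "S ` Z \<subseteq> Z" "m \<le> M" shows "(S ^^ M) ` Z \<subseteq> (S ^^ m) ` Z"
  using assms(2)
proof (induction M rule: dec_induct)
  case (step M)
  have "(S ^^ Suc M) ` Z = (S ^^ M) ` (S ` Z)" by (simp only: funpow_Suc_right image_comp)
  also have "\<dots> \<subseteq> (S ^^ M) ` Z" using assms(1) by auto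
  finally show ?case using step by blast
qed simp

lemma pow_inv: "S ` Z \<subseteq> Z \<Longrightarrow> (S ^^ m) ` Z \<subseteq> Z"
  using pow_antimono[of S Z 0 m] by simp

lemma fixed_set:
  fixes S :: "'a::metric_space \<Rightarrow> 'a"
  assumes "compact Z" "Z \<noteq> {}" "continuous_on Z S" "S ` Z \<subseteq> Z"
  shows "\<exists>W. W \<subseteq> Z \<and> W \<noteq> {} \<and> closed W \<and> S ` W = W"
proof -
  define W where "W = (\<Inter>m. (S ^^ m) ` Z)"
  have cm: "compact ((S ^^ m) ` Z)" for m
  proof -
    have "continuous_on Z (S ^^ m)" using pow_cont[OF assms(3,4)] by blast
    then show ?thesis using assms(1) compact_continuous_image by blast
  qed
  have WZ: "W \<subseteq> Z"
  proof
    fix x assume "x \<in> W"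
    then have "x \<in> (S ^^ 0) ` Z" unfolding W_def by blast
    then show "x \<in> Z" by simp
  qed
  have clW: "closed W" unfolding W_def by (rule closed_INT) (use cm compact_imp_closed in blast)
  have fin: "Z \<inter> (\<Inter>i\<in>I. P i) \<noteq> {}" if "finite I" "\<And>m. (S ^^ m) ` Z \<inter> P m \<noteq> {}"
     "\<And>m M. m \<le> M \<Longrightarrow> P M \<subseteq> P m" for I and P :: "nat \<Rightarrow> 'a set"
  proof -
    define M where "M = Max (insert 0 I)"
    have "i \<le> M" if "i \<in> I" for i unfolding M_def using that \<open>finite I\<close> by auto
    then have "P M \<subseteq> (\<Inter>i\<in>I. P i)" using that(3) by blast
    moreover have "(S ^^ M) ` Z \<subseteq> Z" using pow_inv[OF assms(4)] by blast
    ultimately show ?thesis using that(2)[of M] by blast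
  qed
  have "Z \<inter> (\<Inter>m\<in>UNIV. (S ^^ m) ` Z) \<noteq> {}"
  proof (rule compact_imp_fip_image[OF assms(1)])
    show "closed ((S ^^ m) ` Z)" for m using cm compact_imp_closed by blast
    fix I :: "nat set" assume "finite I"
    show "Z \<inter> (\<Inter>i\<in>I. (S ^^ i) ` Z) \<noteq> {}"
    proof (rule fin[OF \<open>finite I\<close>, of "\<lambda>i. (S ^^ i) ` Z"])
      fix m show "(S ^^ m) ` Z \<inter> (S ^^ m) ` Z \<noteq> {}" using assms(2) by simp
    next
      fix m M :: nat assume "m \<le> M"
      then show "(S ^^ M) ` Z \<subseteq> (S ^^ m) ` Z" by (rule pow_antimono[OF assms(4)])
    qed
  qed
  then have Wne: "W \<noteq> {}" unfolding W_def by auto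
  have "S ` W \<subseteq> W"
  proof
    fix y assume "y \<in> S ` W"
    then obtain x where x: "x \<in> W" "y = S x" by auto
    have "y \<in> (S ^^ m) ` Z" for m
    proof -
      have "x \<in> (S ^^ m) ` Z" using x unfolding W_def by auto
      then have "y \<in> (S ^^ Suc m) ` Z" using x by auto
      then show ?thesis using pow_antimono[OF assms(4), of m "Suc m"] by auto
    qed
    then show "y \<in> W" unfolding W_def by auto
  qed
  moreover have "W \<subseteq> S ` W"
  proof
    fix y assume y: "y \<in> W"
    have clP: "closed (Z \<inter> S -` {y})" using continuous_closed_preimage[OF assms(3)]
      compact_imp_closed[OF assms(1)] by auto
    have "Z \<inter> (\<Inter>m\<in>UNIV. (S ^^ m) ` Z \<inter> (Z \<inter> S -` {y})) \<noteq> {}"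
    proof (rule compact_imp_fip_image[OF assms(1)])
      show "closed ((S ^^ m) ` Z \<inter> (Z \<inter> S -` {y}))" for m
        using cm compact_imp_closed clP by blast
      fix I :: "nat set" assume "finite I"
      show "Z \<inter> (\<Inter>i\<in>I. (S ^^ i) ` Z \<inter> (Z \<inter> S -` {y})) \<noteq> {}"
      proof (rule fin[OF \<open>finite I\<close>, of "\<lambda>i. (S ^^ i) ` Z \<inter> (Z \<inter> S -` {y})"])
        fix m
        have "y \<in> (S ^^ Suc m) ` Z" using y unfolding W_def by blast
        then obtain z where "z \<in> Z" "y = S ((S ^^ m) z)" by auto
        moreover have "(S ^^ m) z \<in> Z" using pow_inv[OF assms(4), of m] \<open>z \<in> Z\<close> by auto
        ultimately show "(S ^^ m) ` Z \<inter> ((S ^^ m) ` Z \<inter> (Z \<inter> S -` {y})) \<noteq> {}" by blast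
      next
        fix m M :: nat assume "m \<le> M"
        then show "(S ^^ M) ` Z \<inter> (Z \<inter> S -` {y}) \<subseteq> (S ^^ m) ` Z \<inter> (Z \<inter> S -` {y})"
          using pow_antimono[OF assms(4)] by blast
      qed
    qed
    then obtain x where "x \<in> W" "S x = y" unfolding W_def by auto
    then show "y \<in> S ` W" by auto
  qed
  ultimately show ?thesis using WZ Wne clW by blast
qed


lemma exact_surj:
  assumes "topologically_exact dist X T" "T ` X \<subseteq> X" "X \<noteq> {}"
  shows "(T ^^ m) ` X = X"
proof -
  have "mopen dist X X" by (auto simp: mopen_def intro: exI[of _ 1])
  then obtain n where n: "n \<ge> 1" "(T ^^ n) ` X = X" using assms(1,3) unfolding topologically_exact_def by blast
  have TX: "T ` X = X"
  proof
    obtain k where "n = Suc k" using n(1) by (cases n) auto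
    then have "X = T ` ((T ^^ k) ` X)" using n(2) by (simp add: image_comp)
    also have "\<dots> \<subseteq> T ` X" using pow_inv[OF assms(2), of k] by blast
    finally show "X \<subseteq> T ` X" .
  qed (rule assms(2))
  show ?thesis
  proof (induction m)
    case (Suc m)
    have "(T ^^ Suc m) ` X = T ` ((T ^^ m) ` X)" by (simp add: image_comp)
    then show ?case using Suc TX by simp
  qed simp
qed

lemma exact_later:
  assumes "\<And>m. (T ^^ m) ` X = X" "(T ^^ k) ` U = X" "k \<le> k'"
  shows "(T ^^ k') ` U = X"
proof -
  have "T ^^ k' = (T ^^ (k' - k)) \<circ> (T ^^ k)" using assms(3) funpow_add[of "k' - k" k T] by simp
  then have "(T ^^ k') ` U = (T ^^ (k' - k)) ` ((T ^^ k) ` U)" by (simp add: image_comp)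
  then show ?thesis using assms(1,2) by simp
qed

lemma exact_tt:
  assumes "topologically_exact dist X T" "T ` X \<subseteq> X" "X \<noteq> {}"
  shows "totally_transitive dist X T"
  unfolding totally_transitive_def transitive_sys_def
proof (intro allI impI)
  fix n :: nat and U V assume n: "n \<ge> 1" and UV: "mopen dist X U \<and> U \<noteq> {} \<and> mopen dist X V \<and> V \<noteq> {}"
  obtain m where m: "m \<ge> 1" "(T ^^ m) ` U = X" using assms(1) UV unfolding topologically_exact_def by blast
  have "(T ^^ (n * m)) ` U = X"
    by (rule exact_later[OF exact_surj[OF assms] m(2)]) (use n in auto)
  then have "((T ^^ n) ^^ m) ` U = X" by (simp add: funpow_mult)
  moreover have "V \<subseteq> X" "V \<noteq> {}" using UV by (auto simp: mopen_def)
  ultimately show "\<exists>k\<ge>1. ((T ^^ n) ^^ k) ` U \<inter> V \<noteq> {}" using m(1) by (intro exI[of _ m]) auto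
qed

theorem mainTheorem2:
  fixes X :: "'a::metric_space set" and T :: "'a \<Rightarrow> 'a"
  assumes "compact X" and "infinite X"
    and "continuous_on X T" and "T ` X \<subseteq> X"
  shows "exactly_devaney_chaotic hausdorff_dist (hyperspace X) (induced_map T)
     \<longleftrightarrow> topologically_exact dist X T \<and> HY_system dist X T"
proof -
  have Xne: "X \<noteq> {}" using assms(2) by auto
  have clX: "closed X" using assms(1) compact_imp_closed by blast
  have XK: "X \<in> hyperspace X" using Xne clX by (auto simp: hyperspace_def)
  note pc = pow_cont[OF assms(3,4)]
  show ?thesis
  proof
    assume ch: "exactly_devaney_chaotic hausdorff_dist (hyperspace X) (induced_map T)"
    have opn: "mopen hausdorff_dist (hyperspace X) {C \<in> hyperspace X. C \<subseteq> U}
       \<and> {C \<in> hyperspace X. C \<subseteq> U} \<noteq> {}" if U: "mopen dist X U" "U \<noteq> {}" for U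
    proof -
      obtain x where x: "x \<in> U" using U by auto
      have "x \<in> X" using U x by (auto simp: mopen_def)
      then have "{x} \<in> {C \<in> hyperspace X. C \<subseteq> U}" using x by (auto simp: hyperspace_def)
      then show ?thesis using hyp_open_sub[OF assms(1) U(1)] by blast
    qed
    have ex: "topologically_exact dist X T"
      unfolding topologically_exact_def
    proof (intro allI impI)
      fix U assume U: "mopen dist X U \<and> U \<noteq> {}"
      have exK: "topologically_exact hausdorff_dist (hyperspace X) (induced_map T)"
        using ch unfolding exactly_devaney_chaotic_def by (rule conjunct1)
      have "mopen hausdorff_dist (hyperspace X) {C \<in> hyperspace X. C \<subseteq> U} \<and> {C \<in> hyperspace X. C \<subseteq> U} \<noteq> {}"
        using opn U by blast
      then obtain n where n: "n \<ge> 1" "(induced_map T ^^ n) ` {C \<in> hyperspace X. C \<subseteq> U} = hyperspace X"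
        using exK unfolding topologically_exact_def by blast
      then have "X \<in> (induced_map T ^^ n) ` {C \<in> hyperspace X. C \<subseteq> U}" using XK by simp
      then obtain C where C0: "C \<in> hyperspace X" "C \<subseteq> U" "(induced_map T ^^ n) C = X" by blast
      then have C: "C \<in> hyperspace X" "C \<subseteq> U" "(T ^^ n) ` C = X" by (auto simp: induced_pow)
      have "(T ^^ n) ` U = X"
      proof
        show "(T ^^ n) ` U \<subseteq> X" using U pc[of n] by (auto simp: mopen_def)
        show "X \<subseteq> (T ^^ n) ` U" using C by auto
      qed
      then show "\<exists>n\<ge>1. (T ^^ n) ` U = X" using n(1) by blast
    qed
    have ds: "dense_small_periodic_sets dist X T"
      unfolding dense_small_periodic_sets_def
    proof (intro allI impI)
      fix U assume U: "mopen dist X U \<and> U \<noteq> {}"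
      have per: "\<forall>\<U>. mopen hausdorff_dist (hyperspace X) \<U> \<and> \<U> \<noteq> {} \<longrightarrow> (\<exists>y\<in>\<U>. periodic_point (hyperspace X) (induced_map T) y)"
        using ch unfolding exactly_devaney_chaotic_def by (rule conjunct2)
      have "mopen hausdorff_dist (hyperspace X) {C \<in> hyperspace X. C \<subseteq> U} \<and> {C \<in> hyperspace X. C \<subseteq> U} \<noteq> {}"
        using opn U by blast
      then obtain C where C: "C \<in> {C \<in> hyperspace X. C \<subseteq> U}"
        "periodic_point (hyperspace X) (induced_map T) C"
        using per by blast
      then obtain k where k: "k \<ge> 1" "(T ^^ k) ` C = C"
        by (auto simp: periodic_point_def induced_pow)
      have "mclosed dist X C" "C \<noteq> {}" using C(1) closed_mclosed by (auto simp: hyperspace_def)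
      then show "\<exists>Z k. mclosed dist X Z \<and> Z \<noteq> {} \<and> Z \<subseteq> U \<and> k \<ge> 1 \<and> (T ^^ k) ` Z \<subseteq> Z"
        using C(1) k by blast
    qed
    show "topologically_exact dist X T \<and> HY_system dist X T"
      using ex ds exact_tt[OF ex assms(4) Xne] by (simp add: HY_system_def)
  next
    assume "topologically_exact dist X T \<and> HY_system dist X T"
    then have ex: "topologically_exact dist X T" and ds: "dense_small_periodic_sets dist X T"
      by (auto simp: HY_system_def)
    have surj: "\<And>m. (T ^^ m) ` X = X" using exact_surj[OF ex assms(4) Xne] .
    have nbhd: "\<exists>A e. A \<in> hyperspace X \<and> e > 0 \<and> (\<forall>D\<in>hyperspace X. hausdorff_dist A D < e \<longrightarrow> D \<in> \<U>)"
      if "mopen hausdorff_dist (hyperspace X) \<U>" "\<U> \<noteq> {}" for \<U>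
      using that unfolding mopen_def by blast
    have exK: "topologically_exact hausdorff_dist (hyperspace X) (induced_map T)"
      unfolding topologically_exact_def
    proof (intro allI impI)
      fix \<U> assume U: "mopen hausdorff_dist (hyperspace X) \<U> \<and> \<U> \<noteq> {}"
      then obtain A e where A: "A \<in> hyperspace X" "e > 0"
        "\<forall>D\<in>hyperspace X. hausdorff_dist A D < e \<longrightarrow> D \<in> \<U>" using nbhd by blast
      have cA: "compact A" "A \<noteq> {}" "A \<subseteq> X" using A(1) hyp_compact[OF assms(1)] by (auto simp: hyperspace_def)
      obtain F where F: "finite F" "F \<subseteq> A" "F \<noteq> {}" "A \<subseteq> (\<Union>a\<in>F. ball a (e/3))"
        "\<And>D. D \<noteq> {} \<Longrightarrow> D \<subseteq> (\<Union>a\<in>F. ball a (e/3)) \<Longrightarrow> (\<forall>a\<in>F. D \<inter> ball a (e/3) \<noteq> {})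
          \<Longrightarrow> hausdorff_dist A D < e"
        using vietoris[OF cA(1,2) A(2)] by blast
      have "\<forall>a\<in>F. \<exists>n\<ge>1. (T ^^ n) ` (ball a (e/6) \<inter> X) = X"
      proof
        fix a assume "a \<in> F"
        then have "a \<in> ball a (e/6) \<inter> X" using F(2) cA(3) A(2) by auto
        then show "\<exists>n\<ge>1. (T ^^ n) ` (ball a (e/6) \<inter> X) = X"
          using ex mopen_ball[of X a "e/6"] unfolding topologically_exact_def by blast
      qed
      from bchoice[OF this] obtain n where n: "\<forall>a\<in>F. n a \<ge> 1 \<and> (T ^^ n a) ` (ball a (e/6) \<inter> X) = X" by blast
      define N where "N = sum n F"
      have N1: "N \<ge> 1"
      proof -
        obtain a where a: "a \<in> F" using F(3) by auto
        have "n a \<le> N" unfolding N_def using a F(1) by (intro member_le_sum) auto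
        then show ?thesis using n a by auto
      qed
      have NV: "(T ^^ N) ` (ball a (e/6) \<inter> X) = X" if "a \<in> F" for a
        by (rule exact_later[OF surj]) (use n that F(1) in \<open>auto simp: N_def intro: member_le_sum\<close>)
      have "(induced_map T ^^ N) ` \<U> = hyperspace X"
      proof
        show "(induced_map T ^^ N) ` \<U> \<subseteq> hyperspace X"
          using U hyp_image[OF assms(1,3,4)] by (auto simp: mopen_def induced_pow)
      next
        show "hyperspace X \<subseteq> (induced_map T ^^ N) ` \<U>"
        proof
          fix C assume C: "C \<in> hyperspace X"
          define D where "D = (\<Union>a\<in>F. cball a (e/6) \<inter> (X \<inter> (T ^^ N) -` C))"
          have pre: "\<exists>x. x \<in> ball a (e/6) \<inter> X \<and> (T ^^ N) x = c" if "a \<in> F" "c \<in> C" for a c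
          proof -
            have "c \<in> (T ^^ N) ` (ball a (e/6) \<inter> X)" using NV[OF that(1)] that(2) C
              by (auto simp: hyperspace_def)
            then show ?thesis by blast
          qed
          have clD: "closed D" unfolding D_def
            using F(1) continuous_closed_preimage[OF conjunct1[OF pc] clX] C
            by (intro closed_UN) (auto simp: hyperspace_def)
          have Cne: "C \<noteq> {}" using C by (auto simp: hyperspace_def)
          have DC: "(T ^^ N) ` D = C"
          proof
            show "(T ^^ N) ` D \<subseteq> C" unfolding D_def by auto
            show "C \<subseteq> (T ^^ N) ` D"
            proof
              fix c assume "c \<in> C"
              obtain a where "a \<in> F" using F(3) by auto
              then obtain x where x: "x \<in> ball a (e/6) \<inter> X" "(T ^^ N) x = c" using pre \<open>c \<in> C\<close> by blast
              then have "x \<in> cball a (e/6) \<inter> (X \<inter> (T ^^ N) -` C)" using \<open>c \<in> C\<close>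
                by (auto simp: mem_ball mem_cball)
              then have "x \<in> D" unfolding D_def using \<open>a \<in> F\<close> by blast
              then show "c \<in> (T ^^ N) ` D" using x(2) by blast
            qed
          qed
          have Dne: "D \<noteq> {}" using DC Cne by auto
          have DK: "D \<in> hyperspace X" using Dne clD unfolding hyperspace_def D_def by auto
          have "hausdorff_dist A D < e"
          proof (rule F(5)[OF Dne])
            show "D \<subseteq> (\<Union>a\<in>F. ball a (e/3))" unfolding D_def using A(2)
              by (auto simp: mem_ball mem_cball)
            show "\<forall>a\<in>F. D \<inter> ball a (e/3) \<noteq> {}"
            proof
              fix a assume a: "a \<in> F"
              obtain c where "c \<in> C" using Cne by auto
              then obtain x where x: "x \<in> ball a (e/6) \<inter> X" "(T ^^ N) x = c" using pre a by blast
              then have "x \<in> cball a (e/6) \<inter> (X \<inter> (T ^^ N) -` C)" using \<open>c \<in> C\<close>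
                by (auto simp: mem_ball mem_cball)
              then have "x \<in> D" unfolding D_def using a by blast
              moreover have "x \<in> ball a (e/3)" using x A(2) by (auto simp: mem_ball)
              ultimately show "D \<inter> ball a (e/3) \<noteq> {}" by blast
            qed
          qed
          then have "D \<in> \<U>" using A(3) DK by blast
          then show "C \<in> (induced_map T ^^ N) ` \<U>" using DC by (auto simp: induced_pow)
        qed
      qed
      then show "\<exists>n\<ge>1. (induced_map T ^^ n) ` \<U> = hyperspace X" using N1 by blast
    qed
    have perK: "\<exists>y\<in>\<U>. periodic_point (hyperspace X) (induced_map T) y"
      if U: "mopen hausdorff_dist (hyperspace X) \<U>" "\<U> \<noteq> {}" for \<U>
    proof -
      obtain A e where A: "A \<in> hyperspace X" "e > 0"
        "\<forall>D\<in>hyperspace X. hausdorff_dist A D < e \<longrightarrow> D \<in> \<U>" using nbhd U by blast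
      have cA: "compact A" "A \<noteq> {}" "A \<subseteq> X" using A(1) hyp_compact[OF assms(1)] by (auto simp: hyperspace_def)
      obtain F where F: "finite F" "F \<subseteq> A" "F \<noteq> {}" "A \<subseteq> (\<Union>a\<in>F. ball a (e/3))"
        "\<And>D. D \<noteq> {} \<Longrightarrow> D \<subseteq> (\<Union>a\<in>F. ball a (e/3)) \<Longrightarrow> (\<forall>a\<in>F. D \<inter> ball a (e/3) \<noteq> {})
          \<Longrightarrow> hausdorff_dist A D < e"
        using vietoris[OF cA(1,2) A(2)] by blast
      have "\<forall>a\<in>F. \<exists>Z k. mclosed dist X Z \<and> Z \<noteq> {} \<and> Z \<subseteq> ball a (e/3) \<inter> X \<and> k \<ge> 1 \<and> (T ^^ k) ` Z \<subseteq> Z"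
      proof
        fix a assume "a \<in> F"
        then have "a \<in> ball a (e/3) \<inter> X" using F(2) cA(3) A(2) by auto
        then show "\<exists>Z k. mclosed dist X Z \<and> Z \<noteq> {} \<and> Z \<subseteq> ball a (e/3) \<inter> X \<and> k \<ge> 1 \<and> (T ^^ k) ` Z \<subseteq> Z"
          using ds mopen_ball[of X a "e/3"] unfolding dense_small_periodic_sets_def by blast
      qed
      from bchoice[OF this] obtain Z where "\<forall>a\<in>F. \<exists>k. mclosed dist X (Z a) \<and> Z a \<noteq> {} \<and> Z a \<subseteq> ball a (e/3) \<inter> X
          \<and> k \<ge> 1 \<and> (T ^^ k) ` Z a \<subseteq> Z a" by blast
      from bchoice[OF this] obtain k where Zk: "\<forall>a\<in>F. mclosed dist X (Z a) \<and> Z a \<noteq> {} \<and> Z a \<subseteq> ball a (e/3) \<inter> X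
          \<and> k a \<ge> 1 \<and> (T ^^ k a) ` Z a \<subseteq> Z a" by blast
      define K where "K = prod k F"
      have K1: "K \<ge> 1" unfolding K_def by (intro prod_ge_1) (use Zk in blast)
      have "\<forall>a\<in>F. \<exists>W. W \<subseteq> Z a \<and> W \<noteq> {} \<and> closed W \<and> (T ^^ K) ` W = W"
      proof
        fix a assume a: "a \<in> F"
        have ZX: "Z a \<subseteq> X" using Zk a by blast
        have "closed (Z a)" using mclosed_closed[OF clX] Zk a by blast
        then have "compact (X \<inter> Z a)" using assms(1) compact_Int_closed by blast
        then have cZ: "compact (Z a)" using ZX by (simp add: Int_absorb1)
        have "K = k a * prod k (F - {a})" unfolding K_def using a F(1) by (simp add: prod.remove)
        then have "T ^^ K = (T ^^ k a) ^^ prod k (F - {a})" by (simp add: funpow_mult)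
        then have inv: "(T ^^ K) ` Z a \<subseteq> Z a" using pow_inv[of "T ^^ k a" "Z a"] Zk a by simp
        have "continuous_on (Z a) (T ^^ K)" using pc ZX continuous_on_subset by blast
        then show "\<exists>W. W \<subseteq> Z a \<and> W \<noteq> {} \<and> closed W \<and> (T ^^ K) ` W = W"
          using fixed_set[OF cZ _ _ inv] Zk a by blast
      qed
      from bchoice[OF this] obtain W where W: "\<forall>a\<in>F. W a \<subseteq> Z a \<and> W a \<noteq> {} \<and> closed (W a) \<and> (T ^^ K) ` W a = W a"
        by blast
      have Wa: "W a \<subseteq> ball a (e/3) \<inter> X" "W a \<noteq> {}" "closed (W a)" "(T ^^ K) ` W a = W a"
        if "a \<in> F" for a
      proof -
        have "W a \<subseteq> Z a" "W a \<noteq> {}" "closed (W a)" "(T ^^ K) ` W a = W a"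
          using bspec[OF W that] by auto
        moreover have "Z a \<subseteq> ball a (e/3) \<inter> X" using bspec[OF Zk that] by auto
        ultimately show "W a \<subseteq> ball a (e/3) \<inter> X" "W a \<noteq> {}" "closed (W a)" "(T ^^ K) ` W a = W a"
          by auto
      qed
      define D where "D = (\<Union>a\<in>F. W a)"
      obtain a0 where a0: "a0 \<in> F" using F(3) by auto
      have Dne: "D \<noteq> {}" unfolding D_def using Wa(2)[OF a0] a0 by blast
      have DX: "D \<subseteq> X" unfolding D_def using Wa(1) by blast
      have "closed D" unfolding D_def using F(1) Wa(3) by (intro closed_UN) auto
      then have DK: "D \<in> hyperspace X" unfolding hyperspace_def using Dne DX by blast
      have "hausdorff_dist A D < e"
      proof (rule F(5)[OF Dne])
        show "D \<subseteq> (\<Union>a\<in>F. ball a (e/3))" unfolding D_def using Wa(1) by blast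
        show "\<forall>a\<in>F. D \<inter> ball a (e/3) \<noteq> {}"
        proof
          fix a assume a: "a \<in> F"
          then have "W a \<subseteq> D \<inter> ball a (e/3)" unfolding D_def using Wa(1)[OF a] by blast
          then show "D \<inter> ball a (e/3) \<noteq> {}" using Wa(2)[OF a] by blast
        qed
      qed
      then have "D \<in> \<U>" using A(3) DK by blast
      moreover have "(induced_map T ^^ K) D = D" unfolding induced_pow D_def image_UN using Wa(4) by simp
      ultimately show ?thesis using DK K1 by (auto simp: periodic_point_def)
    qed
    show "exactly_devaney_chaotic hausdorff_dist (hyperspace X) (induced_map T)"
      unfolding exactly_devaney_chaotic_def using exK perK by blast
  qed
qed

end
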